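(* Let $G$ be a connected graph with $n$ vertices and $m$ edges. If either $n=13$ and $24\le m\le 78$, or $n=14$ and $23\le m\le 91$, then $\frac{q(G)}{R(G)}<\frac{n}{\sqrt{n-1}}$.
   Context: All graphs are finite and simple. For a vertex $u$, $d(u)$ is its degree. The Randić index is $R(G)=\sum_{\{u,v\}\in E(G)} \frac{1}{\sqrt{d(u)d(v)}}$. The signless Laplacian is $Q=D+A$ ($D$ the diagonal degree matrix, $A$ the adjacency matrix), and $q(G)$ is its largest eigenvalue. *)

theory Defs
  imports Complex_Main "Jordan_Normal_Form.Char_Poly"
begin

definition simple_graph :: "nat \<Rightarrow> (nat \<Rightarrow> nat \<Rightarrow> bool) \<Rightarrow> bool" where
  "simple_graph n E \<longleftrightarrow> (\<forall>u v. E u v \<longrightarrow> u < n \<and> v < n \<and> u \<noteq> v \<and> E v u)"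

definition edges :: "nat \<Rightarrow> (nat \<Rightarrow> nat \<Rightarrow> bool) \<Rightarrow> nat set set" where
  "edges n E = {{u, v} | u v. u < n \<and> v < n \<and> E u v}"

definition num_edges :: "nat \<Rightarrow> (nat \<Rightarrow> nat \<Rightarrow> bool) \<Rightarrow> nat" where
  "num_edges n E = card (edges n E)"

definition connected_graph :: "nat \<Rightarrow> (nat \<Rightarrow> nat \<Rightarrow> bool) \<Rightarrow> bool" where
  "connected_graph n E \<longleftrightarrow> n \<ge> 1 \<and> (\<forall>u<n. \<forall>v<n. E\<^sup>*\<^sup>* u v)"

definition deg :: "nat \<Rightarrow> (nat \<Rightarrow> nat \<Rightarrow> bool) \<Rightarrow> nat \<Rightarrow> nat" where
  "deg n E u = card {v. v < n \<and> E u v}"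

definition randic :: "nat \<Rightarrow> (nat \<Rightarrow> nat \<Rightarrow> bool) \<Rightarrow> real" where
  "randic n E = (\<Sum>e\<in>edges n E. 1 / sqrt (\<Prod>u\<in>e. real (deg n E u)))"

definition adj_mat :: "nat \<Rightarrow> (nat \<Rightarrow> nat \<Rightarrow> bool) \<Rightarrow> real mat" where
  "adj_mat n E = mat n n (\<lambda>(i, j). if E i j then 1 else 0)"

definition deg_mat :: "nat \<Rightarrow> (nat \<Rightarrow> nat \<Rightarrow> bool) \<Rightarrow> real mat" where
  "deg_mat n E = mat n n (\<lambda>(i, j). if i = j then real (deg n E i) else 0)"

definition signless_laplacian :: "nat \<Rightarrow> (nat \<Rightarrow> nat \<Rightarrow> bool) \<Rightarrow> real mat" where
  "signless_laplacian n E = deg_mat n E + adj_mat n E"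

definition q_index :: "nat \<Rightarrow> (nat \<Rightarrow> nat \<Rightarrow> bool) \<Rightarrow> real" where
  "q_index n E = Max {k. eigenvalue (signless_laplacian n E) k}"

end

theory Submission
  imports Defs "Jordan_Normal_Form.Spectral_Radius"
begin


lemma edges_sub: "edges n E \<subseteq> Pow {..<n}"
  by (auto simp: edges_def)

lemma finite_edges: "finite (edges n E)"
  by (rule finite_subset[OF edges_sub]) auto

lemma card_inc: assumes sg: "simple_graph n E" and u: "u < n"
  shows "card {e\<in>edges n E. u \<in> e} = deg n E u"
proof -
  have "bij_betw (\<lambda>v. {u,v}) {v. v < n \<and> E u v} {e\<in>edges n E. u \<in> e}"
  proof (rule bij_betwI')
    fix x y assume "x \<in> {v. v < n \<and> E u v}" "y \<in> {v. v < n \<and> E u v}"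
    then have "x \<noteq> u" "y \<noteq> u" using sg unfolding simple_graph_def by auto
    then show "({u, x} = {u, y}) = (x = y)" by (auto simp: doubleton_eq_iff)
  next
    fix x assume "x \<in> {v. v < n \<and> E u v}"
    then show "{u, x} \<in> {e \<in> edges n E. u \<in> e}" using u by (auto simp: edges_def)
  next
    fix e assume "e \<in> {e \<in> edges n E. u \<in> e}"
    then obtain a b where e: "e = {a,b}" "a < n" "b < n" "E a b" "u \<in> e" by (auto simp: edges_def)
    show "\<exists>x\<in>{v. v < n \<and> E u v}. e = {u, x}"
    proof (cases "u = a")
      case True then show ?thesis using e by auto
    next
      case False then have "u = b" using e by auto
      then show ?thesis using e sg unfolding simple_graph_def by (intro bexI[of _ a]) auto
    qed
  qed
  then show ?thesis unfolding deg_def by (simp add: bij_betw_same_card)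
qed

lemma double_count: assumes sg: "simple_graph n E"
  shows "(\<Sum>e\<in>edges n E. \<Sum>u\<in>e. f u) = (\<Sum>u<n. real (deg n E u) * f u)"
proof -
  have "(\<Sum>e\<in>edges n E. \<Sum>u\<in>e. f u) = (\<Sum>e\<in>edges n E. \<Sum>u<n. if u \<in> e then f u else 0)"
  proof (rule sum.cong[OF refl])
    fix e assume "e \<in> edges n E"
    then have "e \<subseteq> {..<n}" using edges_sub by auto
    then show "(\<Sum>u\<in>e. f u) = (\<Sum>u<n. if u \<in> e then f u else 0)"
      by (simp add: sum.If_cases inf.absorb1 inf.absorb2)
  qed
  also have "\<dots> = (\<Sum>u<n. \<Sum>e\<in>edges n E. if u \<in> e then f u else 0)"
    by (rule sum.swap)
  also have "\<dots> = (\<Sum>u<n. real (deg n E u) * f u)"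
  proof (rule sum.cong[OF refl])
    fix u assume "u \<in> {..<n}"
    then have "card {e\<in>edges n E. u \<in> e} = deg n E u" using card_inc[OF sg] by auto
    then show "(\<Sum>e\<in>edges n E. if u \<in> e then f u else 0) = real (deg n E u) * f u"
    proof -
      have "(\<Sum>e\<in>edges n E. if u \<in> e then f u else 0) = (\<Sum>e\<in>{e\<in>edges n E. u \<in> e}. f u)"
        by (rule sum.inter_filter[symmetric, OF finite_edges])
      also have "\<dots> = real (card {e\<in>edges n E. u \<in> e}) * f u" by simp
      finally show ?thesis using \<open>card {e\<in>edges n E. u \<in> e} = deg n E u\<close> by simp
    qed
  qed
  finally show ?thesis .
qed

lemma edge_card2: assumes sg: "simple_graph n E" and "e \<in> edges n E" shows "card e = 2"
  using assms unfolding edges_def simple_graph_def by auto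

lemma handshake: assumes sg: "simple_graph n E"
  shows "(\<Sum>u<n. real (deg n E u)) = 2 * real (num_edges n E)"
proof -
  have "(\<Sum>u<n. real (deg n E u)) = (\<Sum>e\<in>edges n E. \<Sum>u\<in>e. (1::real))"
    using double_count[OF sg, of "\<lambda>_. 1"] by simp
  also have "\<dots> = (\<Sum>e\<in>edges n E. 2)"
    using edge_card2[OF sg] by (intro sum.cong) auto
  finally show ?thesis by (simp add: num_edges_def)
qed

lemma deg_le: assumes sg: "simple_graph n E" and u: "u < n" shows "deg n E u \<le> n - 1"
proof -
  have "{v. v < n \<and> E u v} \<subseteq> {..<n} - {u}" using sg unfolding simple_graph_def by auto
  then have "deg n E u \<le> card ({..<n} - {u})" unfolding deg_def by (intro card_mono) auto
  then show ?thesis using u by simp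
qed

lemma deg_ge: assumes sg: "simple_graph n E" and c: "connected_graph n E" and n: "n \<ge> 2" and u: "u < n"
  shows "deg n E u \<ge> 1"
proof -
  obtain v where v: "v < n" "v \<noteq> u"
  proof (cases "u = 0")
    case True then show ?thesis using that[of 1] n by auto
  next
    case False then show ?thesis using that[of 0] n by auto
  qed
  have "E\<^sup>*\<^sup>* u v" using c u v unfolding connected_graph_def by auto
  then obtain w where "E u w" using v(2) by (metis converse_rtranclpE)
  then have "w \<in> {v. v < n \<and> E u v}" using sg unfolding simple_graph_def by auto
  moreover have "finite {v. v < n \<and> E u v}" by auto
  ultimately have "card {v. v < n \<and> E u v} > 0" by (metis card_gt_0_iff empty_iff)
  then show ?thesis unfolding deg_def by simp
qed



lemma key_ineq:
  fixes a b N :: real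
  assumes "1 \<le> a" "a \<le> N" "1 \<le> b" "b \<le> N"
  shows "1 / sqrt (a * b) \<ge> (1/sqrt N/sqrt a - 1/N/2) + (1/sqrt N/sqrt b - 1/N/2)"
proof -
  define x where "x = 1 / sqrt a"
  define y where "y = 1 / sqrt b"
  define c where "c = 1 / sqrt N"
  have N: "N > 0" using assms by auto
  have cx: "c \<le> x" unfolding c_def x_def using assms
    by (intro divide_left_mono) (auto simp: real_sqrt_le_iff)
  have cy: "c \<le> y" unfolding c_def y_def using assms
    by (intro divide_left_mono) (auto simp: real_sqrt_le_iff)
  have "0 \<le> (x - c) * (y - c)" using cx cy by auto
  then have "x * y \<ge> c * x + c * y - c * c" by (simp add: algebra_simps)
  moreover have "c * c = 1 / N"
  proof -
    have "c * c = 1 / (sqrt N * sqrt N)" unfolding c_def by simp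
    also have "\<dots> = 1 / N" using N by simp
    finally show ?thesis .
  qed
  moreover have "1 / sqrt (a*b) = x * y" unfolding x_def y_def by (simp add: real_sqrt_mult)
  ultimately show ?thesis unfolding x_def y_def c_def by (simp add: field_simps)
qed

lemma sqrt_chord:
  fixes d N :: real
  assumes "1 \<le> d" "d \<le> N"
  shows "sqrt d \<ge> 1 + (d - 1) / (sqrt N + 1)"
proof -
  define t where "t = sqrt d"
  have t1: "t \<ge> 1" unfolding t_def using assms by auto
  have ts: "t \<le> sqrt N" unfolding t_def using assms by auto
  have d: "d = t * t" unfolding t_def using assms by simp
  have "(t - 1) * (t + 1) \<le> (t - 1) * (sqrt N + 1)" using t1 ts by (intro mult_left_mono) auto
  then have "d - 1 \<le> (t - 1) * (sqrt N + 1)" unfolding d by (simp add: algebra_simps)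
  moreover have p: "sqrt N + 1 > 0" using assms by (smt (verit) real_sqrt_ge_zero)
  ultimately have "(d - 1) / (sqrt N + 1) \<le> t - 1" by (simp add: pos_divide_le_eq[OF p])
  then show ?thesis unfolding t_def by simp
qed

lemma randic_lower:
  assumes sg: "simple_graph n E" and c: "connected_graph n E" and n: "n \<ge> 2"
  shows "randic n E \<ge> (1/sqrt (real n - 1)) * (real n + (2 * real (num_edges n E) - real n) / (sqrt (real n - 1) + 1))
           - real (num_edges n E) / (real n - 1)"
proof -
  define N where "N = real n - 1"
  define d where "d = (\<lambda>u. real (deg n E u))"
  define \<phi> where "\<phi> = (\<lambda>u. 1/sqrt N/sqrt (d u) - 1/N/2)"
  have d1: "\<And>u. u < n \<Longrightarrow> 1 \<le> d u" unfolding d_def using deg_ge[OF sg c n] by auto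
  have dN: "\<And>u. u < n \<Longrightarrow> d u \<le> N" unfolding d_def N_def using deg_le[OF sg] n
    by (metis Nat.le_diff_conv2 Suc_1 Suc_leD add_0 add_Suc of_nat_1 of_nat_le_iff of_nat_add diff_add_cancel
        le_add_diff_inverse2 of_nat_diff)
  have "randic n E \<ge> (\<Sum>e\<in>edges n E. \<Sum>u\<in>e. \<phi> u)"
    unfolding randic_def
  proof (rule sum_mono)
    fix e assume "e \<in> edges n E"
    then obtain a b where e: "e = {a,b}" "a < n" "b < n" "E a b" by (auto simp: edges_def)
    have ab: "a \<noteq> b" using sg e unfolding simple_graph_def by auto
    have "(\<Sum>u\<in>e. \<phi> u) = \<phi> a + \<phi> b" using e ab by simp
    also have "\<dots> \<le> 1 / sqrt (d a * d b)" unfolding \<phi>_def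
      by (rule key_ineq) (use d1 dN e in auto)
    also have "\<dots> = 1 / sqrt (\<Prod>u\<in>e. real (deg n E u))" using e ab by (simp add: d_def)
    finally show "(\<Sum>u\<in>e. \<phi> u) \<le> 1 / sqrt (\<Prod>u\<in>e. real (deg n E u))" .
  qed
  also have "(\<Sum>e\<in>edges n E. \<Sum>u\<in>e. \<phi> u) = (\<Sum>u<n. d u * \<phi> u)"
    unfolding d_def by (rule double_count[OF sg])
  also have "\<dots> = (\<Sum>u<n. 1/sqrt N * sqrt (d u) - 1/N/2 * d u)"
  proof (rule sum.cong[OF refl])
    fix u assume "u \<in> {..<n}"
    then have "d u > 0" using d1 by force
    have "d u / (sqrt N * sqrt (d u)) = (d u / sqrt (d u)) / sqrt N"
      by (simp add: divide_divide_eq_left mult.commute)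
    also have "\<dots> = sqrt (d u) / sqrt N" using \<open>d u > 0\<close> by (simp add: real_div_sqrt)
    finally have eq: "d u / (sqrt N * sqrt (d u)) = sqrt (d u) / sqrt N" .
    show "d u * \<phi> u = 1/sqrt N * sqrt (d u) - 1/N/2 * d u"
      unfolding \<phi>_def right_diff_distrib using eq by simp
  qed
  also have "\<dots> = 1/sqrt N * (\<Sum>u<n. sqrt (d u)) - 1/N/2 * (\<Sum>u<n. d u)"
    by (simp add: sum_subtractf sum_distrib_left)
  also have "(\<Sum>u<n. d u) = 2 * real (num_edges n E)" unfolding d_def by (rule handshake[OF sg])
  finally have R: "randic n E \<ge> 1/sqrt N * (\<Sum>u<n. sqrt (d u)) - real (num_edges n E) / N" by simp
  have "(\<Sum>u<n. sqrt (d u)) \<ge> (\<Sum>u<n. 1 + (d u - 1) / (sqrt N + 1))"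
    by (rule sum_mono, rule sqrt_chord) (use d1 dN in auto)
  also have "(\<Sum>u<n. 1 + (d u - 1) / (sqrt N + 1)) = real n + ((\<Sum>u<n. d u) - real n) / (sqrt N + 1)"
    by (simp add: sum.distrib sum_divide_distrib[symmetric] sum_subtractf)
  finally have S: "(\<Sum>u<n. sqrt (d u)) \<ge> real n + (2 * real (num_edges n E) - real n) / (sqrt N + 1)"
    unfolding \<open>(\<Sum>u<n. d u) = 2 * real (num_edges n E)\<close> .
  have "1/sqrt N * (\<Sum>u<n. sqrt (d u)) \<ge> 1/sqrt N * (real n + (2 * real (num_edges n E) - real n) / (sqrt N + 1))"
    by (rule mult_left_mono[OF S]) (use n in \<open>auto simp: N_def\<close>)
  with R show ?thesis unfolding N_def by linarith
qed



lemma Q_carrier: "signless_laplacian n E \<in> carrier_mat n n"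
  by (simp add: signless_laplacian_def deg_mat_def adj_mat_def)

lemma Q_apply:
  assumes x: "x \<in> carrier_vec n" and i: "i < n"
  shows "(signless_laplacian n E *\<^sub>v x) $ i = real (deg n E i) * x $ i + (\<Sum>j<n. if E i j then x $ j else 0)"
proof -
  have "(signless_laplacian n E *\<^sub>v x) $ i = (\<Sum>j\<in>{0..<n}. signless_laplacian n E $$ (i,j) * x $ j)"
    using x i Q_carrier[of n E] by (simp add: scalar_prod_def)
  also have "\<dots> = (\<Sum>j\<in>{0..<n}. (if i = j then real (deg n E i) * x $ j else 0) + (if E i j then x $ j else 0))"
    by (rule sum.cong[OF refl]) (use i in \<open>auto simp: signless_laplacian_def deg_mat_def adj_mat_def distrib_right\<close>)
  also have "\<dots> = real (deg n E i) * x $ i + (\<Sum>j<n. if E i j then x $ j else 0)"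
    using i by (simp add: sum.distrib atLeast0LessThan)
  finally show ?thesis .
qed

lemma count_nb: "(\<Sum>j<n. if E u j then (1::real) else 0) = real (deg n E u)"
proof -
  have "(\<Sum>j<n. if E u j then (1::real) else 0) = (\<Sum>j\<in>{j\<in>{..<n}. E u j}. 1)"
    by (rule sum.inter_filter[symmetric]) auto
  also have "{j\<in>{..<n}. E u j} = {v. v < n \<and> E u v}" by auto
  finally show ?thesis by (simp add: deg_def)
qed

lemma final_alg:
  fixes k d S T N :: real
  assumes "k * d \<le> d * d + S" "S \<le> T" "S \<le> d * N" "1 \<le> d" "d \<le> N"
  shows "k \<le> T / N + N"
proof (cases "d * N \<le> T")
  case True
  have "k * d \<le> (d + N) * d" using assms by (simp add: algebra_simps)
  then have "k \<le> d + N" using assms by (smt (verit) mult_le_cancel_right)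
  moreover have "d \<le> T / N" using True assms by (simp add: le_divide_eq)
  ultimately show ?thesis by simp
next
  case False
  have N: "N > 0" using assms by simp
  have "0 \<le> (d * N - T) * (N - d)" using False assms by simp
  then have "N * (d * d + T) \<le> (T + N * N) * d" by (simp add: algebra_simps)
  then have "d * d + T \<le> (T / N + N) * d" using N by (simp add: field_simps)
  then have "k * d \<le> (T / N + N) * d" using assms by linarith
  then show ?thesis using assms by (simp add: mult_le_cancel_right)
qed

lemma eig_bound:
  assumes sg: "simple_graph n E" and c: "connected_graph n E" and n: "n \<ge> 2"
    and x: "x \<in> carrier_vec n" and x0: "x \<noteq> 0\<^sub>v n"
    and ev: "signless_laplacian n E *\<^sub>v x = k \<cdot>\<^sub>v x"
  shows "k \<le> 2 * real (num_edges n E) / (real n - 1) + real n - 2"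
proof -
  define d where "d = (\<lambda>u. real (deg n E u))"
  define y where "y = (\<lambda>i. \<bar>x $ i\<bar> / d i)"
  have d1: "\<And>u. u < n \<Longrightarrow> 1 \<le> d u" unfolding d_def using deg_ge[OF sg c n] by auto
  have dN: "\<And>u. u < n \<Longrightarrow> d u \<le> real n - 1" unfolding d_def using deg_le[OF sg] n
    by (metis Suc_1 Suc_le_lessD of_nat_1 of_nat_diff of_nat_le_iff less_imp_le_nat)
  obtain u where u: "u < n" and umax: "\<And>i. i < n \<Longrightarrow> y i \<le> y u"
  proof -
    have "0 \<in> {..<n}" using n by simp
    then have "finite (y ` {..<n})" "y ` {..<n} \<noteq> {}" by auto
    then have "Max (y ` {..<n}) \<in> y ` {..<n}" by (rule Max_in)
    then obtain u where "u < n" "y u = Max (y ` {..<n})" by auto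
    moreover have "\<And>i. i < n \<Longrightarrow> y i \<le> Max (y ` {..<n})" by simp
    ultimately show ?thesis using that by auto
  qed
  have "\<exists>i<n. x $ i \<noteq> 0"
  proof (rule ccontr)
    assume "\<not> ?thesis"
    then have "x = 0\<^sub>v n" using x by (intro eq_vecI) auto
    then show False using x0 by simp
  qed
  then obtain i where i: "i < n" "x $ i \<noteq> 0" by auto
  have "y i > 0" using i d1 unfolding y_def by force
  then have yu: "y u > 0" using umax[OF i(1)] by simp
  have du: "d u \<ge> 1" using d1 u by simp
  have xu: "\<bar>x $ u\<bar> = d u * y u" using du unfolding y_def by simp
  define S where "S = (\<Sum>j<n. if E u j then d j else 0)"
  have eq: "k * x $ u = d u * x $ u + (\<Sum>j<n. if E u j then x $ j else 0)"
    using Q_apply[OF x u, of E] ev u x unfolding d_def by (metis index_smult_vec(1) carrier_vecD)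
  have "\<bar>k - d u\<bar> * \<bar>x $ u\<bar> = \<bar>\<Sum>j<n. if E u j then x $ j else 0\<bar>"
    using eq by (simp add: abs_mult[symmetric] algebra_simps)
  also have "\<dots> \<le> (\<Sum>j<n. \<bar>if E u j then x $ j else 0\<bar>)" by (rule sum_abs)
  also have "\<dots> \<le> (\<Sum>j<n. if E u j then d j * y u else 0)"
  proof (rule sum_mono)
    fix j assume j: "j \<in> {..<n}"
    have "\<bar>x $ j\<bar> = d j * y j" using d1[of j] j unfolding y_def by simp
    also have "\<dots> \<le> d j * y u" using umax[of j] j d1[of j] by (intro mult_left_mono) auto
    finally show "\<bar>if E u j then x $ j else 0\<bar> \<le> (if E u j then d j * y u else 0)" by simp
  qed
  also have "\<dots> = S * y u" unfolding S_def sum_distrib_right by (rule sum.cong) auto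
  finally have "\<bar>k - d u\<bar> * (d u * y u) \<le> S * y u" unfolding xu .
  then have "(k - d u) * d u \<le> S" using yu du
    by (smt (verit, best) abs_ge_self mult.assoc mult_le_cancel_right mult_right_mono)
  then have A: "k * d u \<le> d u * d u + S" by (simp add: algebra_simps)
  have B: "S \<le> d u * (real n - 1)"
  proof -
    have "S \<le> (\<Sum>j<n. if E u j then (real n - 1) else 0)" unfolding S_def
      by (rule sum_mono) (use dN in auto)
    also have "\<dots> = (real n - 1) * (\<Sum>j<n. if E u j then 1 else 0)"
      unfolding sum_distrib_left by (rule sum.cong) auto
    also have "\<dots> = (real n - 1) * d u" using count_nb[where n=n and E=E and u=u] unfolding d_def by simp
    finally show ?thesis by (simp add: mult.commute)
  qed
  have C: "S \<le> 2 * real (num_edges n E) - real n + 1"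
  proof -
    have nu: "\<not> E u u" using sg unfolding simple_graph_def by auto
    have "(\<Sum>j<n. (if E u j then d j else 0) + (1 - (if E u j then 1 else 0)) + (if j = u then d u - 1 else 0))
          \<le> (\<Sum>j<n. d j)"
      by (rule sum_mono) (use d1 nu in auto)
    also have "(\<Sum>j<n. d j) = 2 * real (num_edges n E)" unfolding d_def by (rule handshake[OF sg])
    also have "(\<Sum>j<n. (if E u j then d j else 0) + (1 - (if E u j then 1 else 0)) + (if j = u then d u - 1 else 0))
       = S + (real n - d u) + (d u - 1)"
      using u count_nb[where n=n and E=E and u=u] unfolding S_def d_def by (simp add: sum.distrib sum_subtractf)
    finally show ?thesis by simp
  qed
  have "k \<le> (2 * real (num_edges n E) - real n + 1) / (real n - 1) + (real n - 1)"
    by (rule final_alg[OF A C]) (use B du dN u in auto)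
  also have "\<dots> = 2 * real (num_edges n E) / (real n - 1) + real n - 2"
    using n by (simp add: field_simps)
  finally show ?thesis .
qed



lemma mat_vec_index:
  assumes "A \<in> carrier_mat n n" "v \<in> carrier_vec n" "i < n"
  shows "(A *\<^sub>v v) $ i = (\<Sum>j<n. A $$ (i,j) * v $ j)"
  using assms by (auto simp: scalar_prod_def atLeast0LessThan)

lemma real_sym_eigenvalue:
  fixes A :: "real mat"
  assumes A: "A \<in> carrier_mat n n" and n: "n > 0"
    and sym: "\<And>i j. i < n \<Longrightarrow> j < n \<Longrightarrow> A $$ (i,j) = A $$ (j,i)"
  shows "\<exists>k. eigenvalue A k"
proof -
  define C where "C = map_mat complex_of_real A"
  have C: "C \<in> carrier_mat n n" using A unfolding C_def by auto
  obtain l where "l \<in> spectrum C" using spectrum_non_empty[OF C n] by auto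
  then obtain v where v: "v \<in> carrier_vec n" "v \<noteq> 0\<^sub>v n" "C *\<^sub>v v = l \<cdot>\<^sub>v v"
    unfolding spectrum_def eigenvalue_def eigenvector_def using C by auto
  define a where "a = (\<lambda>j. Re (v $ j))"
  define b where "b = (\<lambda>j. Im (v $ j))"
  have comp: "(\<Sum>j<n. complex_of_real (A $$ (i,j)) * v $ j) = l * v $ i" if i: "i < n" for i
  proof -
    have "(C *\<^sub>v v) $ i = (\<Sum>j<n. C $$ (i,j) * v $ j)" by (rule mat_vec_index[OF C v(1) i])
    also have "\<dots> = (\<Sum>j<n. complex_of_real (A $$ (i,j)) * v $ j)"
      using A i unfolding C_def by (intro sum.cong) auto
    finally show ?thesis using v i by simp
  qed
  have ReC: "(\<Sum>j<n. A $$ (i,j) * a j) = Re l * a i - Im l * b i" if i: "i < n" for i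
  proof -
    have "Re (\<Sum>j<n. complex_of_real (A $$ (i,j)) * v $ j) = Re (l * v $ i)" using comp[OF i] by simp
    then show ?thesis unfolding a_def b_def by (simp add: Re_sum)
  qed
  have ImC: "(\<Sum>j<n. A $$ (i,j) * b j) = Im l * a i + Re l * b i" if i: "i < n" for i
  proof -
    have "Im (\<Sum>j<n. complex_of_real (A $$ (i,j)) * v $ j) = Im (l * v $ i)" using comp[OF i] by simp
    then show ?thesis unfolding a_def b_def by (simp add: Im_sum)
  qed
  have swap: "(\<Sum>i<n. b i * (\<Sum>j<n. A $$ (i,j) * a j)) = (\<Sum>i<n. a i * (\<Sum>j<n. A $$ (i,j) * b j))"
  proof -
    have "(\<Sum>i<n. b i * (\<Sum>j<n. A $$ (i,j) * a j)) = (\<Sum>i<n. \<Sum>j<n. b i * A $$ (i,j) * a j)"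
      by (simp add: sum_distrib_left mult.assoc)
    also have "\<dots> = (\<Sum>j<n. \<Sum>i<n. b i * A $$ (i,j) * a j)" by (rule sum.swap)
    also have "\<dots> = (\<Sum>j<n. \<Sum>i<n. a j * A $$ (j,i) * b i)"
      using sym by (intro sum.cong refl) (auto simp: mult.commute mult.left_commute)
    also have "\<dots> = (\<Sum>i<n. a i * (\<Sum>j<n. A $$ (i,j) * b j))"
      by (simp add: sum_distrib_left mult.assoc)
    finally show ?thesis .
  qed
  have "(\<Sum>i<n. b i * (\<Sum>j<n. A $$ (i,j) * a j)) = Re l * (\<Sum>i<n. a i * b i) - Im l * (\<Sum>i<n. b i * b i)"
  proof -
    have "(\<Sum>i<n. b i * (\<Sum>j<n. A $$ (i,j) * a j)) = (\<Sum>i<n. Re l * (a i * b i) - Im l * (b i * b i))"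
    proof (rule sum.cong[OF refl])
      fix i assume "i \<in> {..<n}"
      then have e: "(\<Sum>j<n. A $$ (i,j) * a j) = Re l * a i - Im l * b i" using ReC by auto
      show "b i * (\<Sum>j<n. A $$ (i,j) * a j) = Re l * (a i * b i) - Im l * (b i * b i)"
        unfolding e by (simp add: algebra_simps)
    qed
    also have "\<dots> = Re l * (\<Sum>i<n. a i * b i) - Im l * (\<Sum>i<n. b i * b i)"
      by (simp add: sum_subtractf sum_distrib_left)
    finally show ?thesis .
  qed
  moreover have "(\<Sum>i<n. a i * (\<Sum>j<n. A $$ (i,j) * b j)) = Im l * (\<Sum>i<n. a i * a i) + Re l * (\<Sum>i<n. a i * b i)"
    using ImC by (simp add: sum_distrib_left sum.distrib algebra_simps)
  ultimately have "Im l * ((\<Sum>i<n. a i * a i) + (\<Sum>i<n. b i * b i)) = 0"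
    using swap by (simp add: algebra_simps)
  moreover have "(\<Sum>i<n. a i * a i) + (\<Sum>i<n. b i * b i) > 0"
  proof -
    obtain i where i: "i < n" "v $ i \<noteq> 0"
    proof (rule ccontr)
      assume "\<not> thesis"
      then have "v = 0\<^sub>v n" using v(1) that by (intro eq_vecI) auto
      then show False using v(2) by simp
    qed
    then have "a i \<noteq> 0 \<or> b i \<noteq> 0" unfolding a_def b_def using complex_eqI by force
    then have "a i * a i + b i * b i > 0" by (metis add_pos_nonneg add_nonneg_pos not_real_square_gt_zero zero_le_square)
    moreover have "a i * a i + b i * b i \<le> (\<Sum>i<n. a i * a i + b i * b i)"
      using i by (intro member_le_sum) auto
    ultimately show ?thesis by (simp add: sum.distrib)
  qed
  ultimately have Im0: "Im l = 0" by simp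
  have evw: "eigenvalue A (Re l)" if w: "\<And>i. i < n \<Longrightarrow> (\<Sum>j<n. A $$ (i,j) * w j) = Re l * w i"
    and nz: "\<exists>i<n. w i \<noteq> 0" for w
  proof -
    define x where "x = vec n w"
    have "x \<in> carrier_vec n" unfolding x_def by simp
    moreover have "x \<noteq> 0\<^sub>v n" using nz unfolding x_def by (metis index_vec index_zero_vec(1))
    moreover have "A *\<^sub>v x = Re l \<cdot>\<^sub>v x"
    proof (rule eq_vecI)
      fix i assume "i < dim_vec (Re l \<cdot>\<^sub>v x)"
      then have i: "i < n" unfolding x_def by simp
      have "(A *\<^sub>v x) $ i = (\<Sum>j<n. A $$ (i,j) * x $ j)"
        by (rule mat_vec_index[OF A _ i]) (simp add: x_def)
      also have "\<dots> = (\<Sum>j<n. A $$ (i,j) * w j)" unfolding x_def by (intro sum.cong) auto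
      also have "\<dots> = (Re l \<cdot>\<^sub>v x) $ i" using w[OF i] i unfolding x_def by simp
      finally show "(A *\<^sub>v x) $ i = (Re l \<cdot>\<^sub>v x) $ i" .
    qed (use A in \<open>simp add: x_def\<close>)
    ultimately show ?thesis unfolding eigenvalue_def eigenvector_def using A by auto
  qed
  obtain i where i: "i < n" "v $ i \<noteq> 0"
  proof (rule ccontr)
    assume "\<not> thesis"
    then have "v = 0\<^sub>v n" using v(1) that by (intro eq_vecI) auto
    then show False using v(2) by simp
  qed
  then have "a i \<noteq> 0 \<or> b i \<noteq> 0" unfolding a_def b_def using complex_eqI by force
  then show ?thesis
  proof
    assume "a i \<noteq> 0"
    then show ?thesis using evw[of a] ReC Im0 i by auto
  next
    assume "b i \<noteq> 0"
    then show ?thesis using evw[of b] ImC Im0 i by auto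
  qed
qed



lemma num_gen:
  fixes N m s :: real
  assumes N: "N > 0" and s: "s > 0" "s * s = N" and sb: "s * (3*N+1) < N*(N-1)" and m: "m > N"
  shows "(2*m/N + (N+1) - 2) * s < (N+1) * ((1/s) * ((N+1) + (2*m - (N+1))/(s+1)) - m/N)"
proof -
  define K where "K = N*s*(s+1)"
  have K: "K > 0" unfolding K_def using N s by simp
  have s0: "s \<noteq> 0" "s + 1 \<noteq> 0" "N \<noteq> 0" using N s by auto
  have L: "(2*m/N + (N+1) - 2) * s * K = (2*m + (N-1)*N) * s*s*(s+1)"
    unfolding K_def using s0 by (simp add: field_simps)
  have R: "(N+1) * ((1/s) * ((N+1) + (2*m - (N+1))/(s+1)) - m/N) * K
         = (N+1)*(N*((N+1)*(s+1) + 2*m - (N+1)) - m*s*(s+1))"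
  proof -
    define X where "X = (N+1) + (2*m - (N+1))/(s+1)"
    have h1: "(1/s) * X * K = N * (X*(s+1))" unfolding K_def using s0 by (simp add: field_simps)
    have h2: "X*(s+1) = (N+1)*(s+1) + 2*m - (N+1)" unfolding X_def using s0 by (simp add: field_simps)
    have h3: "m/N*K = m*s*(s+1)" unfolding K_def using s0 by (simp add: field_simps)
    have "(N+1) * ((1/s) * X - m/N) * K = (N+1) * ((1/s) * X * K - m/N*K)" by (simp add: algebra_simps)
    also have "\<dots> = (N+1) * (N * (X*(s+1)) - m*s*(s+1))" by (simp only: h1 h3)
    also have "\<dots> = (N+1)*(N*((N+1)*(s+1) + 2*m - (N+1)) - m*s*(s+1))" by (simp only: h2)
    finally show ?thesis unfolding X_def .
  qed
  have P: "(N+1)*(N*((N+1)*(s+1) + 2*m - (N+1)) - m*s*(s+1)) - (2*m + (N-1)*N) * s*s*(s+1)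
        = (N*(N-1) - (3*N+1)*s)*(m-N)"
  proof -
    have Ns: "N = s * s" using s(2) by simp
    show ?thesis unfolding Ns by (simp add: algebra_simps)
  qed
  have "(N*(N-1) - (3*N+1)*s)*(m-N) > 0" using sb m by (intro mult_pos_pos) (auto simp: algebra_simps)
  then have "(2*m/N + (N+1) - 2) * s * K < (N+1) * ((1/s) * ((N+1) + (2*m - (N+1))/(s+1)) - m/N) * K"
    unfolding L R using P by linarith
  then show ?thesis using K by (simp add: mult_less_cancel_right)
qed


lemma sqrt_bound:
  assumes "n = 13 \<or> n = 14"
  shows "sqrt (real n - 1) * (3 * (real n - 1) + 1) < (real n - 1) * (real n - 1 - 1)"
  using assms
proof
  assume n: "n = 13"
  have "sqrt 12 < (132/37::real)" by (rule real_less_lsqrt) (auto simp: power2_eq_square)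
  then show ?thesis using n by simp
next
  assume n: "n = 14"
  have "sqrt 13 < (39/10::real)" by (rule real_less_lsqrt) (auto simp: power2_eq_square)
  then show ?thesis using n by simp
qed

theorem lemma3p2:
  fixes n m :: nat and E :: "nat \<Rightarrow> nat \<Rightarrow> bool"
  assumes "simple_graph n E" and "connected_graph n E" and "num_edges n E = m"
    and "(n = 13 \<and> 24 \<le> m \<and> m \<le> 78) \<or> (n = 14 \<and> 23 \<le> m \<and> m \<le> 91)"
  shows "q_index n E / randic n E < real n / sqrt (real n - 1)"
proof -
  note sg = assms(1) and c = assms(2)
  have n1314: "n = 13 \<or> n = 14" using assms(4) by auto
  have n2: "n \<ge> 2" using assms(4) by auto
  have mN: "real m > real n - 1" using assms(4) by auto
  define F where "F = 2 * real m / (real n - 1) + real n - 2"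
  define Q where "Q = signless_laplacian n E"
  define s where "s = sqrt (real n - 1)"
  define L where "L = (1/s) * (real n + (2 * real m - real n) / (s + 1)) - real m / (real n - 1)"
  have Qc: "Q \<in> carrier_mat n n" unfolding Q_def by (rule Q_carrier)
  have sym: "Q $$ (i,j) = Q $$ (j,i)" if "i < n" "j < n" for i j
    using that sg unfolding Q_def signless_laplacian_def deg_mat_def adj_mat_def simple_graph_def
    by auto
  obtain k0 where k0: "eigenvalue Q k0" using real_sym_eigenvalue[OF Qc _ sym] n2 by force
  have fin: "finite {k. eigenvalue Q k}"
    using card_finite_spectrum(1)[OF Qc] unfolding spectrum_def .
  have bound: "k \<le> F" if ev: "eigenvalue Q k" for k
  proof -
    obtain v where "eigenvector Q v k" using ev unfolding eigenvalue_def by auto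
    then have v: "v \<in> carrier_vec n" "v \<noteq> 0\<^sub>v n" "Q *\<^sub>v v = k \<cdot>\<^sub>v v"
      unfolding eigenvector_def using Qc by auto
    show ?thesis unfolding F_def using eig_bound[OF sg c n2 v(1) v(2)] v(3) assms(3)
      unfolding Q_def by simp
  qed
  have q: "q_index n E \<le> F"
  proof -
    have ne: "{k. eigenvalue Q k} \<noteq> {}" using k0 by auto
    show ?thesis unfolding q_index_def Q_def[symmetric] using Max_le_iff[OF fin ne] bound by auto
  qed
  have R: "randic n E \<ge> L"
    using randic_lower[OF sg c n2] unfolding L_def s_def assms(3) .
  have num: "F * s < real n * L"
  proof -
    have "real n - 1 > 0" using n2 by simp
    moreover have "s > 0" "s * s = real n - 1" unfolding s_def using n2 by auto
    moreover have "s * (3 * (real n - 1) + 1) < (real n - 1) * (real n - 1 - 1)"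
      unfolding s_def by (rule sqrt_bound[OF n1314])
    ultimately have "(2 * real m / (real n - 1) + (real n - 1 + 1) - 2) * s
       < (real n - 1 + 1) * ((1/s) * ((real n - 1 + 1) + (2 * real m - (real n - 1 + 1)) / (s + 1))
           - real m / (real n - 1))"
      using num_gen mN by blast
    then show ?thesis unfolding F_def L_def by simp
  qed
  have s0: "s > 0" unfolding s_def using n2 by auto
  have F0: "F \<ge> 0"
  proof -
    have "2 * real m / (real n - 1) \<ge> 0" using n2 by simp
    moreover have "real n \<ge> 2" using n2 by simp
    ultimately show ?thesis unfolding F_def by linarith
  qed
  have L0: "L > 0"
  proof -
    have "0 \<le> F * s" using F0 s0 by simp
    then have "0 < real n * L" using num by linarith
    then show ?thesis using n2 by (simp add: zero_less_mult_iff)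
  qed
  have R0: "randic n E > 0" using R L0 by linarith
  have "q_index n E / randic n E \<le> F / randic n E"
    using q R0 by (simp add: divide_right_mono)
  also have "\<dots> \<le> F / L" using F0 L0 R by (intro divide_left_mono) auto
  also have "\<dots> < real n / s"
  proof -
    have "F / L = (F * s) / (L * s)" using s0 by simp
    also have "\<dots> < (real n * L) / (L * s)" using num L0 s0 by (intro divide_strict_right_mono) auto
    also have "\<dots> = real n / s" using L0 by simp
    finally show ?thesis .
  qed
  finally show ?thesis unfolding s_def .
qed

end
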